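(* Let $(\chi_1,u_1)$ and $(\chi_2,u_2)$ be rooted realizable chirotopes. Then their join $(\chi_3,u_3)=(\chi_1,u_1)\vee(\chi_2,u_2)$ is a rooted realizable chirotope; that is, $\chi_3$ is a realizable chirotope and $u_3$ is an extreme element of $\chi_3$.
   Context: For a finite set $E$, $(E)_3$ is the set of ordered triples of distinct elements of $E$. A sign function on $E$ is a map $\chi:(E)_3\to\{-1,1\}$ with $\chi(x,y,z)=\chi(y,z,x)=\chi(z,x,y)=-\chi(z,y,x)=-\chi(y,x,z)=-\chi(x,z,y)$. A chirotope on $E$ is a sign function that moreover satisfies: (interiority) for distinct $t,x,y,z$, if $\chi(t,y,z)=\chi(x,t,z)=\chi(x,y,t)=1$ then $\chi(x,y,z)=1$; (transitivity) for distinct $s,t,x,y,z$, if $\chi(t,s,x)=\chi(t,s,y)=\chi(t,s,z)=\chi(x,y,t)=\chi(y,z,t)=1$ then $\chi(x,z,t)=1$. A chirotope is realizable if there are points $\mathfrak p_e\in\mathbb R^2$ ($e\in E$), no three collinear, such that $\chi(x,y,z)=1$ iff $\mathfrak p_x,\mathfrak p_y,\mathfrak p_z$ are in counterclockwise order. An element $x$ is extreme if there is $y\ne x$ such that $\chi(x,y,z)$ takes the same value for all $z\in E\setminus\{x,y\}$. A rooted chirotope is a pair $(\chi,u)$ with $\chi$ a chirotope on $X\cup\{u\}$ and $u\notin X$ an extreme element; it is realizable if $\chi$ is. For a rooted chirotope, $u^+$ (resp. $u^-$), the successor (resp. predecessor) of $u$ in counterclockwise order on the convex hull, is the element $y$ with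 $\chi(u,y,z)=1$ (resp. $\chi(y,u,z)=1$) for all $z\notin\{u,y\}$. Join: given rooted chirotopes $(\chi_1,u_1)$ on $X_1\cup\{u_1\}$ and $(\chi_2,u_2)$ on $X_2\cup\{u_2\}$, let $X_3$ be the disjoint union of $X_1$ and $X_2$ in which $u_1^-$ and $u_2^+$ are identified into one element $x_0$ (so $X_1,X_2\subseteq X_3$ with $X_1\cap X_2=\{x_0\}$), and let $u_3$ be a new element. The join $(\chi_3,u_3)$ has $\chi_3$ the sign function on $X_3\cup\{u_3\}$ determined (using symmetry) by: for $x,y,z\in X_3$, $\chi_3(x,y,z)=\chi_1(x,y,z)$ if $x,y,z\in X_1$; $=\chi_2(x,y,z)$ if $x,y,z\in X_2$; $=\chi_1(x,y,u_1)$ if $x,y\in X_1$ and $z\in X_2\setminus\{u_2^+\}$; $=\chi_2(u_2,y,z)$ if $x\in X_1\setminus\{u_1^-\}$ and $y,z\in X_2$; and for $x,y\in X_3$, $\chi_3(x,y,u_3)=\chi_1(x,y,u_1)$ if $x,y\in X_1$; $=\chi_2(x,y,u_2)$ if $x,y\in X_2$; $=1$ if $x\in X_1\setminus\{u_1^-\}$ and $y\in X_2\setminus\{u_2^+\}$. (These rules are consistent and determine $\chi_3$ on all triples.) *)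

theory Defs
  imports "HOL-Analysis.Analysis"
begin

text \<open>Sign functions are modelled as maps \<open>'a \<Rightarrow> 'a \<Rightarrow> 'a \<Rightarrow> int\<close>; only their
  values on triples of distinct elements of the ground set matter.\<close>

definition sign_function :: "'a set \<Rightarrow> ('a \<Rightarrow> 'a \<Rightarrow> 'a \<Rightarrow> int) \<Rightarrow> bool" where
  "sign_function E chi \<longleftrightarrow> finite E \<and>
     (\<forall>x\<in>E. \<forall>y\<in>E. \<forall>z\<in>E. distinct [x, y, z] \<longrightarrow>
        chi x y z \<in> {-1, 1} \<and>
        chi x y z = chi y z x \<and> chi y z x = chi z x y \<and> chi z x y = - chi z y x \<and>
        - chi z y x = - chi y x z \<and> - chi y x z = - chi x z y)"

definition chirotope :: "'a set \<Rightarrow> ('a \<Rightarrow> 'a \<Rightarrow> 'a \<Rightarrow> int) \<Rightarrow> bool" where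
  "chirotope E chi \<longleftrightarrow> sign_function E chi \<and>
     (\<forall>t\<in>E. \<forall>x\<in>E. \<forall>y\<in>E. \<forall>z\<in>E. distinct [t, x, y, z] \<longrightarrow>
        chi t y z = 1 \<longrightarrow> chi x t z = 1 \<longrightarrow> chi x y t = 1 \<longrightarrow> chi x y z = 1) \<and>
     (\<forall>s\<in>E. \<forall>t\<in>E. \<forall>x\<in>E. \<forall>y\<in>E. \<forall>z\<in>E. distinct [s, t, x, y, z] \<longrightarrow>
        chi t s x = 1 \<longrightarrow> chi t s y = 1 \<longrightarrow> chi t s z = 1 \<longrightarrow> chi x y t = 1 \<longrightarrow> chi y z t = 1 \<longrightarrow>
        chi x z t = 1)"

definition ccw :: "real \<times> real \<Rightarrow> real \<times> real \<Rightarrow> real \<times> real \<Rightarrow> bool" where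
  "ccw a b c \<longleftrightarrow>
     (fst b - fst a) * (snd c - snd a) - (snd b - snd a) * (fst c - fst a) > 0"

definition realizable :: "'a set \<Rightarrow> ('a \<Rightarrow> 'a \<Rightarrow> 'a \<Rightarrow> int) \<Rightarrow> bool" where
  "realizable E chi \<longleftrightarrow> (\<exists>p :: 'a \<Rightarrow> real \<times> real.
     (\<forall>x\<in>E. \<forall>y\<in>E. \<forall>z\<in>E. distinct [x, y, z] \<longrightarrow> \<not> collinear {p x, p y, p z}) \<and>
     (\<forall>x\<in>E. \<forall>y\<in>E. \<forall>z\<in>E. distinct [x, y, z] \<longrightarrow> (chi x y z = 1 \<longleftrightarrow> ccw (p x) (p y) (p z))))"

definition extreme :: "'a set \<Rightarrow> ('a \<Rightarrow> 'a \<Rightarrow> 'a \<Rightarrow> int) \<Rightarrow> 'a \<Rightarrow> bool" where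
  "extreme E chi x \<longleftrightarrow> x \<in> E \<and>
     (\<exists>y\<in>E. y \<noteq> x \<and> (\<forall>z\<in>E - {x, y}. \<forall>w\<in>E - {x, y}. chi x y z = chi x y w))"

definition rooted_chirotope :: "'a set \<Rightarrow> ('a \<Rightarrow> 'a \<Rightarrow> 'a \<Rightarrow> int) \<Rightarrow> 'a \<Rightarrow> bool" where
  "rooted_chirotope X chi u \<longleftrightarrow> u \<notin> X \<and> chirotope (insert u X) chi \<and> extreme (insert u X) chi u"

definition rooted_realizable_chirotope :: "'a set \<Rightarrow> ('a \<Rightarrow> 'a \<Rightarrow> 'a \<Rightarrow> int) \<Rightarrow> 'a \<Rightarrow> bool" where
  "rooted_realizable_chirotope X chi u \<longleftrightarrow> rooted_chirotope X chi u \<and> realizable (insert u X) chi"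

text \<open>Successor \<open>u\<^sup>+\<close> and predecessor \<open>u\<^sup>-\<close> of the root on the convex hull
  (ground set \<open>E = X \<union> {u}\<close>).\<close>
definition succ_root :: "'a set \<Rightarrow> ('a \<Rightarrow> 'a \<Rightarrow> 'a \<Rightarrow> int) \<Rightarrow> 'a \<Rightarrow> 'a" where
  "succ_root E chi u = (THE y. y \<in> E \<and> y \<noteq> u \<and> (\<forall>z\<in>E - {u, y}. chi u y z = 1))"

definition pred_root :: "'a set \<Rightarrow> ('a \<Rightarrow> 'a \<Rightarrow> 'a \<Rightarrow> int) \<Rightarrow> 'a \<Rightarrow> 'a" where
  "pred_root E chi u = (THE y. y \<in> E \<and> y \<noteq> u \<and> (\<forall>z\<in>E - {u, y}. chi y u z = 1))"

text \<open>The defining rules of the join (for one fixed ordering of the triple);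
  \<open>x0\<close> is the identified element \<open>u\<^sub>1\<^sup>- = u\<^sub>2\<^sup>+\<close>.\<close>
definition join_rule ::
  "'a set \<Rightarrow> ('a \<Rightarrow> 'a \<Rightarrow> 'a \<Rightarrow> int) \<Rightarrow> 'a \<Rightarrow> 'a set \<Rightarrow> ('a \<Rightarrow> 'a \<Rightarrow> 'a \<Rightarrow> int) \<Rightarrow> 'a
   \<Rightarrow> 'a \<Rightarrow> 'a \<Rightarrow> 'a \<Rightarrow> 'a \<Rightarrow> 'a \<Rightarrow> int option" where
  "join_rule X1 chi1 u1 X2 chi2 u2 x0 u3 x y z =
     (if x \<in> X1 \<and> y \<in> X1 \<and> z \<in> X1 then Some (chi1 x y z)
      else if x \<in> X2 \<and> y \<in> X2 \<and> z \<in> X2 then Some (chi2 x y z)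
      else if x \<in> X1 \<and> y \<in> X1 \<and> z \<in> X2 - {x0} then Some (chi1 x y u1)
      else if x \<in> X1 - {x0} \<and> y \<in> X2 \<and> z \<in> X2 then Some (chi2 u2 y z)
      else if z = u3 \<and> x \<in> X1 \<and> y \<in> X1 then Some (chi1 x y u1)
      else if z = u3 \<and> x \<in> X2 \<and> y \<in> X2 then Some (chi2 x y u2)
      else if z = u3 \<and> x \<in> X1 - {x0} \<and> y \<in> X2 - {x0} then Some 1
      else None)"

text \<open>The join sign function \<open>chi\<^sub>3\<close>, extended to all orderings of a triple by the
  symmetry of sign functions (the value 0 is used outside the ground set).\<close>
definition join_chi ::
  "'a set \<Rightarrow> ('a \<Rightarrow> 'a \<Rightarrow> 'a \<Rightarrow> int) \<Rightarrow> 'a \<Rightarrow> 'a set \<Rightarrow> ('a \<Rightarrow> 'a \<Rightarrow> 'a \<Rightarrow> int) \<Rightarrow> 'a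
   \<Rightarrow> 'a \<Rightarrow> 'a \<Rightarrow> 'a \<Rightarrow> 'a \<Rightarrow> int" where
  "join_chi X1 chi1 u1 X2 chi2 u2 u3 x y z =
     (let x0 = pred_root (insert u1 X1) chi1 u1;
          r = join_rule X1 chi1 u1 X2 chi2 u2 x0 u3
      in case r x y z of Some v \<Rightarrow> v | None \<Rightarrow>
         (case r y z x of Some v \<Rightarrow> v | None \<Rightarrow>
         (case r z x y of Some v \<Rightarrow> v | None \<Rightarrow>
         (case r z y x of Some v \<Rightarrow> - v | None \<Rightarrow>
         (case r y x z of Some v \<Rightarrow> - v | None \<Rightarrow>
         (case r x z y of Some v \<Rightarrow> - v | None \<Rightarrow> 0))))))"

end

theory Submission
  imports Defs
begin

definition DD :: "real \<times> real \<Rightarrow> real \<times> real \<Rightarrow> real \<times> real \<Rightarrow> real" where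
  "DD a b c = (fst b - fst a) * (snd c - snd a) - (snd b - snd a) * (fst c - fst a)"

lemma ccw_DD: "ccw a b c \<longleftrightarrow> DD a b c > 0"
  by (simp add: ccw_def DD_def)

lemma cross0_iff:
  fixes u v :: "real \<times> real"
  shows "fst u * snd v - snd u * fst v = 0 \<longleftrightarrow> u = 0 \<or> v = 0 \<or> (\<exists>k. v = k *\<^sub>R u)"
proof
  assume h: "fst u * snd v - snd u * fst v = 0"
  show "u = 0 \<or> v = 0 \<or> (\<exists>k. v = k *\<^sub>R u)"
  proof (cases "u = 0")
    case False
    show ?thesis
    proof (cases "fst u = 0")
      case True
      with False have "snd u \<noteq> 0" by (simp add: prod_eq_iff)
      with h True have "fst v = 0" by simp
      hence "v = (snd v / snd u) *\<^sub>R u" using True \<open>snd u \<noteq> 0\<close> by (simp add: prod_eq_iff)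
      thus ?thesis by blast
    next
      case f: False
      have "snd v = (fst v / fst u) * snd u" using h f by (simp add: field_simps)
      hence "v = (fst v / fst u) *\<^sub>R u" using f by (simp add: prod_eq_iff)
      thus ?thesis by blast
    qed
  qed simp
next
  assume "u = 0 \<or> v = 0 \<or> (\<exists>k. v = k *\<^sub>R u)"
  thus "fst u * snd v - snd u * fst v = 0" by auto
qed

lemma collinear_DD: "collinear {a, b, c} \<longleftrightarrow> DD a b c = 0"
proof -
  have "collinear {a, b, c} \<longleftrightarrow> collinear {0, a - b, c - b}" by (rule collinear_3) simp
  also have "\<dots> \<longleftrightarrow> fst (a - b) * snd (c - b) - snd (a - b) * fst (c - b) = 0"
    unfolding collinear_lemma by (rule cross0_iff[symmetric])
  also have "fst (a - b) * snd (c - b) - snd (a - b) * fst (c - b) = - DD a b c"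
    by (simp add: DD_def algebra_simps)
  finally show ?thesis by simp
qed

definition cr :: "real \<times> real \<Rightarrow> real \<times> real \<Rightarrow> real" where
  "cr u v = fst u * snd v - snd u * fst v"

lemma DD_cr: "DD a b c = cr (b - a) (c - a)"
  by (simp add: DD_def cr_def)

lemma DD_rot1: "DD b c a = DD a b c" by (simp add: DD_def algebra_simps)
lemma DD_rot2: "DD c a b = DD a b c" by (simp add: DD_def algebra_simps)
lemma DD_swap12: "DD b a c = - DD a b c" by (simp add: DD_def algebra_simps)
lemma DD_swap23: "DD a c b = - DD a b c" by (simp add: DD_def algebra_simps)
lemma DD_swap13: "DD c b a = - DD a b c" by (simp add: DD_def algebra_simps)

definition rz :: "'a set \<Rightarrow> ('a \<Rightarrow> 'a \<Rightarrow> 'a \<Rightarrow> int) \<Rightarrow> ('a \<Rightarrow> real \<times> real) \<Rightarrow> bool" where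
  "rz E chi p \<longleftrightarrow> (\<forall>x\<in>E. \<forall>y\<in>E. \<forall>z\<in>E. distinct [x, y, z] \<longrightarrow>
     DD (p x) (p y) (p z) \<noteq> 0 \<and> chi x y z = (if DD (p x) (p y) (p z) > 0 then 1 else -1))"

lemma sf_props:
  assumes "sign_function E chi" "x \<in> E" "y \<in> E" "z \<in> E" "distinct [x, y, z]"
  shows "chi x y z \<in> {-1, 1}" "chi y z x = chi x y z" "chi z x y = chi x y z"
    "chi y x z = - chi x y z" "chi x z y = - chi x y z" "chi z y x = - chi x y z"
proof -
  note H = assms(1)[unfolded sign_function_def, THEN conjunct2, rule_format, OF assms(2-5)]
  show "chi x y z \<in> {-1, 1}" using H by blast
  have e1: "chi x y z = chi y z x" and e2: "chi y z x = chi z x y" and e3: "chi z x y = - chi z y x"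
    and e4: "- chi z y x = - chi y x z" and e5: "- chi y x z = - chi x z y" using H by blast+
  show "chi y z x = chi x y z" "chi z x y = chi x y z"
    "chi y x z = - chi x y z" "chi x z y = - chi x y z" "chi z y x = - chi x y z"
    using e1 e2 e3 e4 e5 by linarith+
qed

lemma realizable_rz:
  assumes "sign_function E chi" "realizable E chi"
  shows "\<exists>p. rz E chi p"
proof -
  obtain p where p1: "\<forall>x\<in>E. \<forall>y\<in>E. \<forall>z\<in>E. distinct [x, y, z] \<longrightarrow> \<not> collinear {p x, p y, p z}"
    and p2: "\<forall>x\<in>E. \<forall>y\<in>E. \<forall>z\<in>E. distinct [x, y, z] \<longrightarrow> (chi x y z = 1 \<longleftrightarrow> ccw (p x) (p y) (p z))"
    using assms(2) unfolding realizable_def by blast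
  have "rz E chi p"
    unfolding rz_def
  proof (intro ballI impI conjI)
    fix x y z assume h: "x \<in> E" "y \<in> E" "z \<in> E" "distinct [x, y, z]"
    show "DD (p x) (p y) (p z) \<noteq> 0" using p1 h collinear_DD by blast
    have "chi x y z \<in> {-1, 1}" using sf_props(1)[OF assms(1) h] .
    then show "chi x y z = (if DD (p x) (p y) (p z) > 0 then 1 else -1)"
      using p2 h ccw_DD by auto
  qed
  thus ?thesis by blast
qed

lemma rz_realizable: "rz E chi p \<Longrightarrow> realizable E chi"
  unfolding rz_def realizable_def
  apply (rule exI[of _ p])
  apply (auto simp: collinear_DD ccw_DD)
  done

lemma rz_sign_function:
  assumes "finite E" "rz E chi p"
  shows "sign_function E chi"
  unfolding sign_function_def
proof (intro conjI ballI impI assms(1))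
  fix x y z assume h: "x \<in> E" "y \<in> E" "z \<in> E" "distinct [x, y, z]"
  have d: "distinct [y, z, x]" "distinct [z, x, y]" "distinct [z, y, x]" "distinct [y, x, z]" "distinct [x, z, y]"
    using h(4) by auto
  note r = assms(2)[unfolded rz_def, rule_format]
  have e: "chi x y z = (if DD (p x) (p y) (p z) > 0 then 1 else -1)" "DD (p x) (p y) (p z) \<noteq> 0"
    using r[OF h] by auto
  show "chi x y z \<in> {-1, 1}" using e by auto
  have D: "DD (p y) (p z) (p x) = DD (p x) (p y) (p z)" "DD (p z) (p x) (p y) = DD (p x) (p y) (p z)"
    "DD (p z) (p y) (p x) = - DD (p x) (p y) (p z)" "DD (p y) (p x) (p z) = - DD (p x) (p y) (p z)"
    "DD (p x) (p z) (p y) = - DD (p x) (p y) (p z)"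
    by (rule DD_rot1, rule DD_rot2, rule DD_swap13, rule DD_swap12, rule DD_swap23)
  have e1: "chi y z x = chi x y z" using r[OF h(2,3,1) d(1)] e D by simp
  have e2: "chi z x y = chi x y z" using r[OF h(3,1,2) d(2)] e D by simp
  have e3: "chi z y x = - chi x y z" using r[OF h(3,2,1) d(3)] e D by auto
  have e4: "chi y x z = - chi x y z" using r[OF h(2,1,3) d(4)] e D by auto
  have e5: "chi x z y = - chi x y z" using r[OF h(1,3,2) d(5)] e D by auto
  show "chi x y z = chi y z x" "chi y z x = chi z x y" "chi z x y = - chi z y x"
    "- chi z y x = - chi y x z" "- chi y x z = - chi x z y"
    using e1 e2 e3 e4 e5 by simp_all
qed

lemma cr_GP: "cr s y * cr x z = cr s x * cr y z + cr s z * cr x y"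
  by (simp add: cr_def algebra_simps)

lemma DD_interior: "DD x y z = DD t y z + DD x t z + DD x y t"
  by (simp add: DD_def algebra_simps)

lemma rz_chirotope:
  assumes "finite E" "rz E chi p"
  shows "chirotope E chi"
  unfolding chirotope_def
proof (intro conjI ballI impI rz_sign_function[OF assms])
  note r = assms(2)[unfolded rz_def, rule_format]
  fix t x y z assume h: "t \<in> E" "x \<in> E" "y \<in> E" "z \<in> E" "distinct [t, x, y, z]"
    and c: "chi t y z = 1" "chi x t z = 1" "chi x y t = 1"
  have "DD (p t) (p y) (p z) > 0" using r[of t y z] h c(1) by (auto split: if_splits)
  moreover have "DD (p x) (p t) (p z) > 0" using r[of x t z] h c(2) by (auto split: if_splits)
  moreover have "DD (p x) (p y) (p t) > 0" using r[of x y t] h c(3) by (auto split: if_splits)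
  ultimately have "DD (p x) (p y) (p z) > 0" using DD_interior[of "p x" "p y" "p z" "p t"] by linarith
  thus "chi x y z = 1" using r[of x y z] h by auto
next
  note r = assms(2)[unfolded rz_def, rule_format]
  fix s t x y z assume h: "s \<in> E" "t \<in> E" "x \<in> E" "y \<in> E" "z \<in> E" "distinct [s, t, x, y, z]"
    and c: "chi t s x = 1" "chi t s y = 1" "chi t s z = 1" "chi x y t = 1" "chi y z t = 1"
  define S where "S = p s - p t"
  define X where "X = p x - p t"
  define Y where "Y = p y - p t"
  define Z where "Z = p z - p t"
  have q: "DD (p t) (p s) (p x) = cr S X" "DD (p t) (p s) (p y) = cr S Y" "DD (p t) (p s) (p z) = cr S Z"
    "DD (p x) (p y) (p t) = cr X Y" "DD (p y) (p z) (p t) = cr Y Z" "DD (p x) (p z) (p t) = cr X Z"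
    by (simp_all add: DD_def cr_def S_def X_def Y_def Z_def algebra_simps)
  have a1: "cr S X > 0" using r[of t s x] h c(1) q by (auto split: if_splits)
  have a2: "cr S Y > 0" using r[of t s y] h c(2) q by (auto split: if_splits)
  have a3: "cr S Z > 0" using r[of t s z] h c(3) q by (auto split: if_splits)
  have a4: "cr X Y > 0" using r[of x y t] h c(4) q by (auto split: if_splits)
  have a5: "cr Y Z > 0" using r[of y z t] h c(5) q by (auto split: if_splits)
  have gp: "cr S Y * cr X Z = cr S X * cr Y Z + cr S Z * cr X Y" by (rule cr_GP)
  have "cr S X * cr Y Z > 0" "cr S Z * cr X Y > 0" using a1 a3 a4 a5 by simp_all
  hence "cr S Y * cr X Z > 0" unfolding gp by simp
  hence "cr X Z > 0" using a2 by (simp add: zero_less_mult_iff)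
  hence "DD (p x) (p z) (p t) > 0" using q by simp
  thus "chi x z t = 1" using r[of x z t] h by auto
qed

lemma DD_affine:
  "DD (al * fst a + be * snd a + e1, ga * fst a + de * snd a + e2)
      (al * fst b + be * snd b + e1, ga * fst b + de * snd b + e2)
      (al * fst c + be * snd c + e1, ga * fst c + de * snd c + e2) = (al * de - be * ga) * DD a b c"
  by (simp add: DD_def algebra_simps)

lemma rz_normalize:
  assumes "rz E chi p" "u \<in> E" "x0 \<in> E" "u \<noteq> x0"
  shows "\<exists>q. rz E chi q \<and> q u = (0, 0) \<and> q x0 = (1, 0)"
proof (cases "p u = p x0")
  case True
  have sub: "E \<subseteq> {u, x0}"
  proof
    fix z assume z: "z \<in> E"
    show "z \<in> {u, x0}"
    proof (rule ccontr)
      assume "z \<notin> {u, x0}"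
      hence "distinct [u, x0, z]" using assms(4) by auto
      hence "DD (p u) (p x0) (p z) \<noteq> 0" using assms(1)[unfolded rz_def] assms(2,3) z by blast
      thus False using True by (simp add: DD_def)
    qed
  qed
  define q :: "_ \<Rightarrow> real \<times> real" where "q = (\<lambda>v. if v = u then (0, 0) else (1, 0))"
  have "rz E chi q" unfolding rz_def
  proof (intro ballI impI)
    fix x y z assume "x \<in> E" "y \<in> E" "z \<in> E" "distinct [x, y, z]"
    with sub have False by auto
    thus "DD (q x) (q y) (q z) \<noteq> 0 \<and> chi x y z = (if DD (q x) (q y) (q z) > 0 then 1 else -1)" ..
  qed
  thus ?thesis using assms(4) by (auto simp: q_def)
next
  case False
  define d1 where "d1 = fst (p x0) - fst (p u)"
  define d2 where "d2 = snd (p x0) - snd (p u)"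
  define n where "n = d1 * d1 + d2 * d2"
  have "d1 \<noteq> 0 \<or> d2 \<noteq> 0" using False by (auto simp: d1_def d2_def prod_eq_iff)
  hence n: "n > 0" unfolding n_def by (metis add_pos_nonneg add_nonneg_pos not_real_square_gt_zero mult_nonneg_nonneg zero_le_square)
  define al where "al = d1 / n"
  define be where "be = d2 / n"
  define ga where "ga = - d2 / n"
  define de where "de = d1 / n"
  define e1 where "e1 = - (al * fst (p u) + be * snd (p u))"
  define e2 where "e2 = - (ga * fst (p u) + de * snd (p u))"
  define q where "q = (\<lambda>v. (al * fst (p v) + be * snd (p v) + e1, ga * fst (p v) + de * snd (p v) + e2))"
  have k0: "al * de - be * ga = (d1 * d1 + d2 * d2) / (n * n)" using n
    by (simp add: al_def be_def ga_def de_def field_simps)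
  have k: "al * de - be * ga = 1 / n" unfolding k0 n_def[symmetric] using n by simp
  have kp: "al * de - be * ga > 0" using k n by simp
  have Dq: "DD (q x) (q y) (q z) = (al * de - be * ga) * DD (p x) (p y) (p z)" for x y z
    unfolding q_def by (rule DD_affine)
  have "rz E chi q" unfolding rz_def
  proof (intro ballI impI)
    fix x y z assume h: "x \<in> E" "y \<in> E" "z \<in> E" "distinct [x, y, z]"
    have "DD (p x) (p y) (p z) \<noteq> 0 \<and> chi x y z = (if DD (p x) (p y) (p z) > 0 then 1 else -1)"
      using assms(1)[unfolded rz_def] h by blast
    thus "DD (q x) (q y) (q z) \<noteq> 0 \<and> chi x y z = (if DD (q x) (q y) (q z) > 0 then 1 else -1)"
      unfolding Dq using kp by (simp add: zero_less_mult_iff)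
  qed
  moreover have "q u = (0, 0)" by (simp add: q_def e1_def e2_def)
  moreover have "q x0 = (1, 0)"
  proof -
    have a: "al * d1 + be * d2 = 1" using n
      by (simp add: al_def be_def add_divide_distrib[symmetric] n_def[symmetric])
    have b: "ga * d1 + de * d2 = 0" by (simp add: ga_def de_def algebra_simps)
    have "fst (q x0) = al * d1 + be * d2" "snd (q x0) = ga * d1 + de * d2"
      by (simp_all add: q_def e1_def e2_def d1_def d2_def algebra_simps)
    thus ?thesis using a b by (simp add: prod_eq_iff)
  qed
  ultimately show ?thesis by blast
qed

lemma key_ex:
  fixes A :: "'b \<Rightarrow> real \<times> real"
  assumes T: "finite T" "T \<noteq> {}"
    and sgn: "\<forall>a\<in>T. \<forall>b\<in>T. cr S (A a) * cr S (A b) > 0"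
    and nz: "\<forall>a\<in>T. \<forall>b\<in>T. a \<noteq> b \<longrightarrow> cr (A a) (A b) \<noteq> 0"
  shows "\<exists>y\<in>T. \<forall>z\<in>T - {y}. cr (A y) (A z) > 0" "\<exists>y\<in>T. \<forall>z\<in>T - {y}. cr (A z) (A y) > 0"
proof -
  define key where "key a = (fst S * fst (A a) + snd S * snd (A a)) / cr S (A a)" for a
  have nzS: "cr S (A a) \<noteq> 0" if "a \<in> T" for a using sgn that by fastforce
  have "S \<noteq> 0" using nzS T(2) by (auto simp: cr_def)
  hence sS: "fst S * fst S + snd S * snd S > 0"
    by (metis add_pos_nonneg add_nonneg_pos not_real_square_gt_zero zero_le_square prod_eq_iff zero_prod_def fst_zero snd_zero)
  have diff: "(key a - key b) * (cr S (A a) * cr S (A b)) = (fst S * fst S + snd S * snd S) * cr (A a) (A b)"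
    if "a \<in> T" "b \<in> T" for a b
  proof -
    have "(key a - key b) * (cr S (A a) * cr S (A b)) =
      (fst S * fst (A a) + snd S * snd (A a)) * cr S (A b) - (fst S * fst (A b) + snd S * snd (A b)) * cr S (A a)"
      using nzS[OF that(1)] nzS[OF that(2)] by (simp add: key_def field_simps)
    also have "\<dots> = (fst S * fst S + snd S * snd S) * cr (A a) (A b)"
      by (simp add: cr_def algebra_simps)
    finally show ?thesis .
  qed
  have pos: "cr (A a) (A b) > 0" if "a \<in> T" "b \<in> T" "a \<noteq> b" "key a \<ge> key b" for a b
  proof -
    have "cr S (A a) * cr S (A b) > 0" using sgn that(1,2) by blast
    hence "(key a - key b) * (cr S (A a) * cr S (A b)) \<ge> 0" using that(4) by simp
    hence "(fst S * fst S + snd S * snd S) * cr (A a) (A b) \<ge> 0" using diff that by simp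
    hence "cr (A a) (A b) \<ge> 0" using sS by (simp add: zero_le_mult_iff)
    thus ?thesis using nz that by force
  qed
  have fin: "finite (key ` T)" "key ` T \<noteq> {}" using T by auto
  obtain y where y: "y \<in> T" "key y = Max (key ` T)" using Max_in[OF fin] by auto
  show "\<exists>y\<in>T. \<forall>z\<in>T - {y}. cr (A y) (A z) > 0"
  proof (intro bexI[of _ y] ballI)
    fix z assume z: "z \<in> T - {y}"
    have "key z \<le> key y" using Max_ge[OF fin(1)] y z by auto
    thus "cr (A y) (A z) > 0" using pos[of y z] y z by auto
  qed (rule y(1))
  obtain y' where y': "y' \<in> T" "key y' = Min (key ` T)" using Min_in[OF fin] by auto
  show "\<exists>y\<in>T. \<forall>z\<in>T - {y}. cr (A z) (A y) > 0"
  proof (intro bexI[of _ y'] ballI)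
    fix z assume z: "z \<in> T - {y'}"
    have "key y' \<le> key z" using Min_le[OF fin(1)] y' z by auto
    thus "cr (A z) (A y') > 0" using pos[of z y'] y' z by auto
  qed (rule y'(1))
qed

lemma rooted_basic:
  assumes "rooted_realizable_chirotope X chi u"
  shows "u \<notin> X" "sign_function (insert u X) chi" "finite X" "\<exists>p. rz (insert u X) chi p"
    "extreme (insert u X) chi u"
proof -
  show "u \<notin> X" "extreme (insert u X) chi u" using assms
    unfolding rooted_realizable_chirotope_def rooted_chirotope_def by auto
  show sf: "sign_function (insert u X) chi" using assms
    unfolding rooted_realizable_chirotope_def rooted_chirotope_def chirotope_def by auto
  thus "finite X" unfolding sign_function_def by auto
  show "\<exists>p. rz (insert u X) chi p"
    using realizable_rz[OF sf] assms unfolding rooted_realizable_chirotope_def by auto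
qed

lemma rz_val:
  assumes "rz E chi p" "x \<in> E" "y \<in> E" "z \<in> E" "distinct [x, y, z]"
  shows "DD (p x) (p y) (p z) \<noteq> 0" "chi x y z = (if DD (p x) (p y) (p z) > 0 then 1 else -1)"
  using assms unfolding rz_def by blast+

lemma rz_one_iff:
  assumes "rz E chi p" "x \<in> E" "y \<in> E" "z \<in> E" "distinct [x, y, z]"
  shows "chi x y z = 1 \<longleftrightarrow> DD (p x) (p y) (p z) > 0"
  using rz_val[OF assms] by auto

lemma succ_pred_ex:
  assumes R: "rooted_realizable_chirotope X chi u"
  shows "\<exists>y\<in>X. \<forall>z\<in>X - {y}. chi u y z = 1" "\<exists>y\<in>X. \<forall>z\<in>X - {y}. chi y u z = 1"
proof -
  note B = rooted_basic[OF R]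
  define E where "E = insert u X"
  obtain p where p: "rz E chi p" using B(4) E_def by auto
  have sf: "sign_function E chi" using B(2) E_def by simp
  obtain s where s: "s \<in> E" "s \<noteq> u" "\<forall>z\<in>E - {u, s}. \<forall>w\<in>E - {u, s}. chi u s z = chi u s w"
    using B(5) unfolding extreme_def E_def by blast
  have sX: "s \<in> X" using s E_def by auto
  have EE: "E - {u, s} = X - {s}" using B(1) E_def by auto
  have uE: "u \<in> E" and XE: "\<And>x. x \<in> X \<Longrightarrow> x \<in> E" using E_def by auto
  have "\<exists>y\<in>X. \<forall>z\<in>X - {y}. chi u y z = 1 \<and> (\<exists>y\<in>X. \<forall>z\<in>X - {y}. chi y u z = 1)"
  proof (cases "X - {s} = {}")
    case True
    thus ?thesis using sX by (intro bexI[of _ s]) auto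
  next
    case False
    then obtain z0 where z0: "z0 \<in> X - {s}" by blast
    define c where "c = chi u s z0"
    have cz: "\<forall>z\<in>X - {s}. chi u s z = c" using s(3) z0 EE c_def by metis
    have dz: "distinct [u, s, z0]" using z0 s(2) B(1) by auto
    have "c \<in> {-1, 1}" using sf_props(1)[OF sf uE s(1) XE dz] z0 c_def by auto
    define T where "T = X - {s}"
    define A where "A a = p a - p u" for a
    define S where "S = p s - p u"
    have fT: "finite T" "T \<noteq> {}" using B(3) False T_def by auto
    have DA: "DD (p u) (p a) (p b) = cr (A a) (A b)" for a b by (simp add: DD_cr A_def)
    have DS: "DD (p u) (p s) (p b) = cr S (A b)" for b by (simp add: DD_cr A_def S_def)
    have dist: "distinct [u, a, b]" if "a \<in> X" "b \<in> X" "a \<noteq> b" for a b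
      using that B(1) by auto
    have nz: "\<forall>a\<in>T. \<forall>b\<in>T. a \<noteq> b \<longrightarrow> cr (A a) (A b) \<noteq> 0"
      using rz_val(1)[OF p uE XE XE dist] DA T_def by auto
    have val: "chi u a b = 1 \<longleftrightarrow> cr (A a) (A b) > 0" if "a \<in> X" "b \<in> X" "a \<noteq> b" for a b
      using rz_one_iff[OF p uE XE XE dist] that DA by auto
    have valS: "chi u s b = (if cr S (A b) > 0 then 1 else -1)" "cr S (A b) \<noteq> 0" if "b \<in> T" for b
      using rz_val[OF p uE XE[OF sX] XE dist[OF sX]] that DS T_def by auto
    show ?thesis
    proof (cases "c = 1")
      case c1: True
      have a1: "\<exists>y\<in>X. \<forall>z\<in>X - {y}. chi u y z = 1"
        using cz c1 sX by (intro bexI[of _ s]) auto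
      have "\<forall>a\<in>T. cr S (A a) > 0" using valS cz c1 T_def by (metis one_neq_neg_one)
      hence sg: "\<forall>a\<in>T. \<forall>b\<in>T. cr S (A a) * cr S (A b) > 0" by simp
      obtain y where y: "y \<in> T" "\<forall>z\<in>T - {y}. cr (A z) (A y) > 0" using key_ex(2)[OF fT sg nz] by blast
      have yX: "y \<in> X" "y \<noteq> s" using y T_def by auto
      have "\<forall>z\<in>X - {y}. chi y u z = 1"
      proof
        fix z assume z: "z \<in> X - {y}"
        have dd: "distinct [u, z, y]" using z yX B(1) by auto
        have rot: "chi y u z = chi u z y" using sf_props(3)[OF sf uE XE XE dd] z yX by auto
        show "chi y u z = 1"
        proof (cases "z = s")
          case True
          thus ?thesis using rot cz c1 yX by auto
        next
          case False
          thus ?thesis using rot val[of z y] y z T_def yX by auto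
        qed
      qed
      thus ?thesis using a1 yX by blast
    next
      case False
      hence cm: "c = -1" using \<open>c \<in> {-1, 1}\<close> by auto
      have a2: "\<exists>y\<in>X. \<forall>z\<in>X - {y}. chi y u z = 1"
      proof (intro bexI[of _ s] ballI sX)
        fix z assume z: "z \<in> X - {s}"
        have dd: "distinct [u, s, z]" using z s(2) B(1) by auto
        show "chi s u z = 1" using sf_props(4)[OF sf uE XE[OF sX] XE dd] z cz cm by auto
      qed
      have "\<forall>a\<in>T. cr S (A a) < 0" using valS cz cm T_def
        by (metis linorder_neqE_linordered_idom one_neq_neg_one)
      hence sg: "\<forall>a\<in>T. \<forall>b\<in>T. cr S (A a) * cr S (A b) > 0" by (simp add: mult_neg_neg)
      obtain y where y: "y \<in> T" "\<forall>z\<in>T - {y}. cr (A y) (A z) > 0" using key_ex(1)[OF fT sg nz] by blast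
      have yX: "y \<in> X" "y \<noteq> s" using y T_def by auto
      have "\<forall>z\<in>X - {y}. chi u y z = 1"
      proof
        fix z assume z: "z \<in> X - {y}"
        show "chi u y z = 1"
        proof (cases "z = s")
          case True
          have dd: "distinct [u, s, y]" using yX s(2) B(1) by auto
          have "chi u y s = - chi u s y" using sf_props(5)[OF sf uE XE[OF sX] XE dd] yX by auto
          thus ?thesis using True cz cm yX T_def by auto
        next
          case False
          thus ?thesis using val[of y z] y z T_def yX by auto
        qed
      qed
      thus ?thesis using a2 yX by blast
    qed
  qed
  thus "\<exists>y\<in>X. \<forall>z\<in>X - {y}. chi u y z = 1" "\<exists>y\<in>X. \<forall>z\<in>X - {y}. chi y u z = 1" by blast+
qed

lemma succ_root_prop:
  assumes R: "rooted_realizable_chirotope X chi u"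
  shows "succ_root (insert u X) chi u \<in> X"
    "\<forall>z\<in>X - {succ_root (insert u X) chi u}. chi u (succ_root (insert u X) chi u) z = 1"
proof -
  note B = rooted_basic[OF R]
  obtain y where y: "y \<in> X" "\<forall>z\<in>X - {y}. chi u y z = 1" using succ_pred_ex(1)[OF R] by blast
  have EE: "insert u X - {u, w} = X - {w}" for w using B(1) by auto
  have "succ_root (insert u X) chi u = y"
    unfolding succ_root_def
  proof (rule the_equality)
    show "y \<in> insert u X \<and> y \<noteq> u \<and> (\<forall>z\<in>insert u X - {u, y}. chi u y z = 1)"
      using y B(1) EE by auto
  next
    fix y' assume h: "y' \<in> insert u X \<and> y' \<noteq> u \<and> (\<forall>z\<in>insert u X - {u, y'}. chi u y' z = 1)"
    show "y' = y"
    proof (rule ccontr)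
      assume ne: "y' \<noteq> y"
      have y'X: "y' \<in> X" using h by auto
      have dd: "distinct [u, y, y']" using ne y B(1) y'X by auto
      have "chi u y' y = - chi u y y'"
        using sf_props(5)[OF B(2) _ _ _ dd] y y'X by auto
      moreover have "chi u y' y = 1" using h y ne EE by auto
      moreover have "chi u y y' = 1" using y y'X ne by auto
      ultimately show False by simp
    qed
  qed
  thus "succ_root (insert u X) chi u \<in> X"
    "\<forall>z\<in>X - {succ_root (insert u X) chi u}. chi u (succ_root (insert u X) chi u) z = 1"
    using y by auto
qed

lemma pred_root_prop:
  assumes R: "rooted_realizable_chirotope X chi u"
  shows "pred_root (insert u X) chi u \<in> X"
    "\<forall>z\<in>X - {pred_root (insert u X) chi u}. chi (pred_root (insert u X) chi u) u z = 1"
proof -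
  note B = rooted_basic[OF R]
  obtain y where y: "y \<in> X" "\<forall>z\<in>X - {y}. chi y u z = 1" using succ_pred_ex(2)[OF R] by blast
  have EE: "insert u X - {u, w} = X - {w}" for w using B(1) by auto
  have "pred_root (insert u X) chi u = y"
    unfolding pred_root_def
  proof (rule the_equality)
    show "y \<in> insert u X \<and> y \<noteq> u \<and> (\<forall>z\<in>insert u X - {u, y}. chi y u z = 1)"
      using y B(1) EE by auto
  next
    fix y' assume h: "y' \<in> insert u X \<and> y' \<noteq> u \<and> (\<forall>z\<in>insert u X - {u, y'}. chi y' u z = 1)"
    show "y' = y"
    proof (rule ccontr)
      assume ne: "y' \<noteq> y"
      have y'X: "y' \<in> X" using h by auto
      have dd: "distinct [y, u, y']" using ne y B(1) y'X by auto
      have "chi y' u y = - chi y u y'"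
        using sf_props(6)[OF B(2) _ _ _ dd] y y'X by auto
      moreover have "chi y' u y = 1" using h y ne EE by auto
      moreover have "chi y u y' = 1" using y y'X ne by auto
      ultimately show False by simp
    qed
  qed
  thus "pred_root (insert u X) chi u \<in> X"
    "\<forall>z\<in>X - {pred_root (insert u X) chi u}. chi (pred_root (insert u X) chi u) u z = 1"
    using y by auto
qed

definition det3 :: "real \<times> real \<times> real \<Rightarrow> real \<times> real \<times> real \<Rightarrow> real \<times> real \<times> real \<Rightarrow> real" where
  "det3 a b c = fst a * (fst (snd b) * snd (snd c) - snd (snd b) * fst (snd c))
   - fst (snd a) * (fst b * snd (snd c) - snd (snd b) * fst c)
   + snd (snd a) * (fst b * fst (snd c) - fst (snd b) * fst c)"

definition dehom :: "real \<times> real \<times> real \<Rightarrow> real \<times> real" where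
  "dehom v = (fst v / snd (snd v), fst (snd v) / snd (snd v))"

definition hom :: "real \<times> real \<Rightarrow> real \<times> real \<times> real" where
  "hom p = (fst p, snd p, 1)"

definition Mv :: "real \<Rightarrow> real \<Rightarrow> real \<times> real \<times> real \<Rightarrow> real \<times> real \<times> real" where
  "Mv K e w = (fst w * e^2 - K * (snd (snd w) - fst w) * e^3, - (snd (snd w) - fst w) * e^3,
      fst w * e^2 + (snd (snd w) - fst w) * e^3 + fst (snd w))"

definition hu3 :: "real \<Rightarrow> real \<Rightarrow> real \<times> real \<times> real" where
  "hu3 K e = (- K * e, - e, 1 + e)"

lemma det3_hom: "det3 (hom a) (hom b) (hom c) = DD a b c"
  by (simp add: det3_def hom_def DD_def algebra_simps)

lemma dehom_hom: "dehom (hom p) = p"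
  by (simp add: dehom_def hom_def)

lemma DD_dehom:
  assumes "snd (snd a) > 0" "snd (snd b) > 0" "snd (snd c) > 0"
  shows "DD (dehom a) (dehom b) (dehom c) = det3 a b c / (snd (snd a) * snd (snd b) * snd (snd c))"
  using assms by (simp add: DD_def dehom_def det3_def field_simps)

lemma sgn_DD_dehom:
  assumes "snd (snd a) > 0" "snd (snd b) > 0" "snd (snd c) > 0"
  shows "sgn (DD (dehom a) (dehom b) (dehom c)) = sgn (det3 a b c)"
  using assms by (simp add: DD_dehom sgn_mult)

lemma Mv_det: "det3 (Mv K e a) (Mv K e b) (Mv K e c) = e^5 * det3 a b c"
  by (simp add: det3_def Mv_def algebra_simps eval_nat_numeral)

lemma Mv_x0: "Mv K e (hom (1, 0)) = (e^2, 0, e^2)"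
  by (simp add: Mv_def hom_def)

lemma Mv_u3: "Mv K e (0, e^2, 1) = e^2 *\<^sub>R hu3 K e"
  by (simp add: Mv_def hu3_def algebra_simps eval_nat_numeral)

lemma dehom_scale: "c \<noteq> 0 \<Longrightarrow> dehom (c *\<^sub>R v) = dehom v"
  by (simp add: dehom_def)

lemma ev_sgn:
  fixes G :: "real \<Rightarrow> real"
  assumes "(G \<longlongrightarrow> L) (at_right 0)" "L \<noteq> 0" "\<And>e. e > 0 \<Longrightarrow> F e = e^k * G e"
  shows "eventually (\<lambda>e. sgn (F e) = sgn L) (at_right 0)"
proof -
  have "eventually (\<lambda>e. sgn (G e) = sgn L) (at_right 0)"
  proof (cases "L > 0")
    case True
    show ?thesis using order_tendstoD(1)[OF assms(1) True] by eventually_elim (use True in auto)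
  next
    case False
    hence "L < 0" using assms(2) by auto
    show ?thesis using order_tendstoD(2)[OF assms(1) \<open>L < 0\<close>] by eventually_elim (use \<open>L < 0\<close> in auto)
  qed
  moreover have "eventually (\<lambda>e. e > (0::real)) (at_right 0)" by (rule eventually_at_right_less)
  ultimately show ?thesis
    by eventually_elim (simp add: assms(3) sgn_mult)
qed

lemma cont_lim: "isCont G (0::real) \<Longrightarrow> (G \<longlongrightarrow> G 0) (at_right 0)"
  unfolding isCont_def by (rule tendsto_within_subset) auto

lemma ev_sgn':
  fixes G :: "real \<Rightarrow> real"
  assumes "isCont G 0" "G 0 \<noteq> 0" "\<And>e. e > 0 \<Longrightarrow> F e = e^k * G e" "sgn (G 0) = s"
  shows "eventually (\<lambda>e. sgn (F e) = s) (at_right 0)"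
  using ev_sgn[OF cont_lim[OF assms(1)] assms(2), of F k] assms(3,4) by simp

lemma ev_R3:
  assumes "snd c > 0" "DD a b (0, 0) \<noteq> 0"
  shows "eventually (\<lambda>e. sgn (det3 (hom a) (hom b) (Mv K e (hom c))) = sgn (DD a b (0, 0))) (at_right 0)"
proof (rule ev_sgn'[where k = 0])
  let ?G = "\<lambda>e. det3 (hom a) (hom b) (Mv K e (hom c))"
  show "isCont ?G 0"
    by (simp only: det3_def Mv_def hom_def fst_conv snd_conv) (intro continuous_intros)
  have g0: "?G 0 = snd c * DD a b (0, 0)" by (simp add: det3_def Mv_def hom_def DD_def algebra_simps)
  show "?G 0 \<noteq> 0" using g0 assms by simp
  show "sgn (?G 0) = sgn (DD a b (0, 0))" using g0 assms by (simp add: sgn_mult)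
qed simp

lemma ev_R4:
  assumes "snd a < 0" "DD (0, 0) y z \<noteq> 0"
  shows "eventually (\<lambda>e. sgn (det3 (hom a) (Mv K e (hom y)) (Mv K e (hom z))) = sgn (DD (0, 0) y z)) (at_right 0)"
proof (rule ev_sgn'[where k = 2])
  define W where "W e v = (fst v - e * (1 - fst v) * K, - e * (1 - fst v), fst v + e * (1 - fst v))" for e :: real and v :: "real \<times> real"
  let ?G = "\<lambda>e. snd y * det3 (hom a) (0, 0, 1) (W e z) + snd z * det3 (hom a) (W e y) (0, 0, 1)
     + e^2 * det3 (hom a) (W e y) (W e z)"
  show "isCont ?G 0"
    by (simp only: det3_def W_def hom_def fst_conv snd_conv) (intro continuous_intros)
  show "det3 (hom a) (Mv K e (hom y)) (Mv K e (hom z)) = e^2 * ?G e" for e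
    by (simp add: det3_def Mv_def hom_def W_def algebra_simps eval_nat_numeral)
  have g0: "?G 0 = - snd a * DD (0, 0) y z" by (simp add: det3_def W_def hom_def DD_def algebra_simps)
  show "?G 0 \<noteq> 0" using g0 assms by simp
  show "sgn (?G 0) = sgn (DD (0, 0) y z)" using g0 assms by (simp add: sgn_mult)
qed

lemma ev_R5:
  assumes "DD a b (0, 0) \<noteq> 0"
  shows "eventually (\<lambda>e. sgn (det3 (hom a) (hom b) (hu3 K e)) = sgn (DD a b (0, 0))) (at_right 0)"
proof (rule ev_sgn'[where k = 0])
  let ?G = "\<lambda>e. det3 (hom a) (hom b) (hu3 K e)"
  show "isCont ?G 0"
    by (simp only: det3_def hu3_def hom_def fst_conv snd_conv) (intro continuous_intros)
  have g0: "?G 0 = DD a b (0, 0)" by (simp add: det3_def hu3_def hom_def DD_def algebra_simps)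
  show "?G 0 \<noteq> 0" using g0 assms by simp
  show "sgn (?G 0) = sgn (DD a b (0, 0))" using g0 assms by simp
qed simp

lemma det3_scale3: "det3 a b (c *\<^sub>R v) = c * det3 a b v"
  by (simp add: det3_def algebra_simps)

lemma ev_R6:
  assumes "DD a b (0, 0) \<noteq> 0"
  shows "eventually (\<lambda>e. sgn (det3 (Mv K e (hom a)) (Mv K e (hom b)) (hu3 K e)) = sgn (DD a b (0, 0))) (at_right 0)"
proof (rule ev_sgn'[where k = 3])
  let ?G = "\<lambda>e. det3 (hom a) (hom b) (0, e^2, 1)"
  show "isCont ?G 0"
    by (simp only: det3_def hom_def fst_conv snd_conv) (intro continuous_intros)
  show "det3 (Mv K e (hom a)) (Mv K e (hom b)) (hu3 K e) = e^3 * ?G e" if "e > 0" for e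
  proof -
    have "e^2 * det3 (Mv K e (hom a)) (Mv K e (hom b)) (hu3 K e) = e^5 * ?G e"
      using Mv_det[of K e "hom a" "hom b" "(0, e^2, 1)"] unfolding Mv_u3 det3_scale3 .
    hence "e^2 * det3 (Mv K e (hom a)) (Mv K e (hom b)) (hu3 K e) = e^2 * (e^3 * ?G e)"
      by (simp add: eval_nat_numeral algebra_simps)
    moreover have ne: "e^2 \<noteq> 0" using that by simp
    ultimately show ?thesis using mult_left_cancel[OF ne] by blast
  qed
  have g0: "?G 0 = DD a b (0, 0)" by (simp add: det3_def hom_def DD_def algebra_simps)
  show "?G 0 \<noteq> 0" using g0 assms by simp
  show "sgn (?G 0) = sgn (DD a b (0, 0))" using g0 assms by simp
qed

lemma ev_R7:
  assumes "fst a - K * snd a > 0" "snd c > 0"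
  shows "eventually (\<lambda>e. det3 (hom a) (Mv K e (hom c)) (hu3 K e) > 0) (at_right 0)"
proof -
  define W where "W e v = (fst v - e * (1 - fst v) * K, - e * (1 - fst v), fst v + e * (1 - fst v))" for e :: real and v :: "real \<times> real"
  let ?G = "\<lambda>e. snd c * det3 (hom a) (0, 0, 1) (-K, -1, 1) + e * det3 (hom a) (W e c) (0, 0, 1)
     + e^2 * det3 (hom a) (W e c) (-K, -1, 1)"
  have "eventually (\<lambda>e. sgn (det3 (hom a) (Mv K e (hom c)) (hu3 K e)) = 1) (at_right 0)"
  proof (rule ev_sgn'[where k = 1])
    show "isCont ?G 0"
      by (simp only: det3_def W_def hom_def fst_conv snd_conv) (intro continuous_intros)
    show "det3 (hom a) (Mv K e (hom c)) (hu3 K e) = e^1 * ?G e" for e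
      by (simp add: det3_def Mv_def hom_def hu3_def W_def algebra_simps eval_nat_numeral)
    have g0: "?G 0 = snd c * (fst a - K * snd a)" by (simp add: det3_def W_def hom_def algebra_simps)
    show "?G 0 \<noteq> 0" using g0 assms by simp
    show "sgn (?G 0) = 1" using g0 assms by simp
  qed
  thus ?thesis by eventually_elim (simp add: sgn_1_pos)
qed

lemma ev_pos:
  assumes "snd c > 0"
  shows "eventually (\<lambda>e. snd (snd (Mv K e (hom c))) > 0) (at_right 0)"
proof -
  let ?G = "\<lambda>e. snd (snd (Mv K e (hom c)))"
  have "isCont ?G 0" by (simp only: Mv_def hom_def fst_conv snd_conv) (intro continuous_intros)
  moreover have "?G 0 = snd c" by (simp add: Mv_def hom_def)
  ultimately have "(?G \<longlongrightarrow> snd c) (at_right 0)" using cont_lim by metis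
  thus ?thesis using order_tendstoD(1) assms by blast
qed

locale J0 =
  fixes X1 X2 :: "'a set" and chi1 chi2 :: "'a \<Rightarrow> 'a \<Rightarrow> 'a \<Rightarrow> int"
    and u1 u2 u3 x0 s1 :: 'a and q1 q2 :: "'a \<Rightarrow> real \<times> real" and K :: real
  assumes fin1: "finite X1" and fin2: "finite X2"
    and u1: "u1 \<notin> X1" and u2: "u2 \<notin> X2" and u3: "u3 \<notin> X1 \<union> X2"
    and inter: "X1 \<inter> X2 = {x0}"
    and rz1: "rz (insert u1 X1) chi1 q1" and rz2: "rz (insert u2 X2) chi2 q2"
    and q1u: "q1 u1 = (0, 0)" and q1x: "q1 x0 = (1, 0)"
    and q2u: "q2 u2 = (0, 0)" and q2x: "q2 x0 = (1, 0)"
    and pred1: "\<forall>z\<in>X1 - {x0}. chi1 x0 u1 z = 1"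
    and succ2: "\<forall>z\<in>X2 - {x0}. chi2 u2 x0 z = 1"
    and s1: "s1 \<in> X1" and succ1: "\<forall>z\<in>X1 - {s1}. chi1 u1 s1 z = 1"
    and Kc: "\<forall>x\<in>X1 - {x0}. fst (q1 x) - K * snd (q1 x) > 0"
begin

lemma x0X1: "x0 \<in> X1" and x0X2: "x0 \<in> X2" using inter by auto

lemma below: "x \<in> X1 - {x0} \<Longrightarrow> snd (q1 x) < 0"
proof -
  assume x: "x \<in> X1 - {x0}"
  have "chi1 x0 u1 x = 1" using pred1 x by auto
  moreover have "distinct [x0, u1, x]" using x u1 x0X1 by auto
  ultimately have "DD (q1 x0) (q1 u1) (q1 x) > 0" using rz_one_iff[OF rz1] x x0X1 by auto
  thus ?thesis by (simp add: q1x q1u DD_def)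
qed

lemma above: "z \<in> X2 - {x0} \<Longrightarrow> snd (q2 z) > 0"
proof -
  assume z: "z \<in> X2 - {x0}"
  have "chi2 u2 x0 z = 1" using succ2 z by auto
  moreover have "distinct [u2, x0, z]" using z u2 x0X2 by auto
  ultimately have "DD (q2 u2) (q2 x0) (q2 z) > 0" using rz_one_iff[OF rz2] z x0X2 by auto
  thus ?thesis by (simp add: q2x q2u DD_def)
qed

lemma nz1: "x \<in> X1 \<Longrightarrow> y \<in> X1 \<Longrightarrow> x \<noteq> y \<Longrightarrow> DD (q1 x) (q1 y) (0, 0) \<noteq> 0"
  using rz_val(1)[OF rz1, of x y u1] u1 q1u by auto

lemma nz2: "x \<in> X2 \<Longrightarrow> y \<in> X2 \<Longrightarrow> x \<noteq> y \<Longrightarrow> DD (q2 x) (q2 y) (0, 0) \<noteq> 0"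
  using rz_val(1)[OF rz2, of x y u2] u2 q2u by auto

lemma nz2': "x \<in> X2 \<Longrightarrow> y \<in> X2 \<Longrightarrow> x \<noteq> y \<Longrightarrow> DD (0, 0) (q2 x) (q2 y) \<noteq> 0"
  using rz_val(1)[OF rz2, of u2 x y] u2 q2u by auto

lemma ev_imp: "(P \<Longrightarrow> eventually Q F) \<Longrightarrow> eventually (\<lambda>e. P \<longrightarrow> Q e) F"
  by (cases P) (auto elim: eventually_mono)

lemma ex_e: "\<exists>e::real. e > 0 \<and>
   (\<forall>z\<in>X2. snd (snd (Mv K e (hom (q2 z)))) > 0) \<and>
   (\<forall>x\<in>X1. \<forall>y\<in>X1. \<forall>z\<in>X2 - {x0}. x \<noteq> y \<longrightarrow>
      sgn (det3 (hom (q1 x)) (hom (q1 y)) (Mv K e (hom (q2 z)))) = sgn (DD (q1 x) (q1 y) (0, 0))) \<and>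
   (\<forall>x\<in>X1 - {x0}. \<forall>y\<in>X2. \<forall>z\<in>X2. y \<noteq> z \<longrightarrow>
      sgn (det3 (hom (q1 x)) (Mv K e (hom (q2 y))) (Mv K e (hom (q2 z)))) = sgn (DD (0, 0) (q2 y) (q2 z))) \<and>
   (\<forall>x\<in>X1. \<forall>y\<in>X1. x \<noteq> y \<longrightarrow>
      sgn (det3 (hom (q1 x)) (hom (q1 y)) (hu3 K e)) = sgn (DD (q1 x) (q1 y) (0, 0))) \<and>
   (\<forall>x\<in>X2. \<forall>y\<in>X2. x \<noteq> y \<longrightarrow>
      sgn (det3 (Mv K e (hom (q2 x))) (Mv K e (hom (q2 y))) (hu3 K e)) = sgn (DD (q2 x) (q2 y) (0, 0))) \<and>
   (\<forall>x\<in>X1 - {x0}. \<forall>y\<in>X2 - {x0}. det3 (hom (q1 x)) (Mv K e (hom (q2 y))) (hu3 K e) > 0)"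
proof -
  have f1: "finite X1" "finite (X1 - {x0})" and f2: "finite X2" "finite (X2 - {x0})" using fin1 fin2 by auto
  have e0: "eventually (\<lambda>e::real. e > 0) (at_right 0)" by (rule eventually_at_right_less)
  have e1: "eventually (\<lambda>e. \<forall>z\<in>X2. snd (snd (Mv K e (hom (q2 z)))) > 0) (at_right 0)"
  proof (rule eventually_ball_finite[OF f2(1)], intro ballI)
    fix z assume z: "z \<in> X2"
    show "eventually (\<lambda>e. snd (snd (Mv K e (hom (q2 z)))) > 0) (at_right 0)"
    proof (cases "z = x0")
      case True
      show ?thesis using e0 by eventually_elim (simp add: True q2x Mv_x0)
    next
      case False
      thus ?thesis using ev_pos above z by auto
    qed
  qed
  have e3: "eventually (\<lambda>e. \<forall>x\<in>X1. \<forall>y\<in>X1. \<forall>z\<in>X2 - {x0}. x \<noteq> y \<longrightarrow>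
      sgn (det3 (hom (q1 x)) (hom (q1 y)) (Mv K e (hom (q2 z)))) = sgn (DD (q1 x) (q1 y) (0, 0))) (at_right 0)"
    by (intro eventually_ball_finite f1 f2 ballI ev_imp ev_R3 above nz1)
  have e4: "eventually (\<lambda>e. \<forall>x\<in>X1 - {x0}. \<forall>y\<in>X2. \<forall>z\<in>X2. y \<noteq> z \<longrightarrow>
      sgn (det3 (hom (q1 x)) (Mv K e (hom (q2 y))) (Mv K e (hom (q2 z)))) = sgn (DD (0, 0) (q2 y) (q2 z))) (at_right 0)"
    by (intro eventually_ball_finite f1 f2 ballI ev_imp ev_R4 below nz2')
  have e5: "eventually (\<lambda>e. \<forall>x\<in>X1. \<forall>y\<in>X1. x \<noteq> y \<longrightarrow>
      sgn (det3 (hom (q1 x)) (hom (q1 y)) (hu3 K e)) = sgn (DD (q1 x) (q1 y) (0, 0))) (at_right 0)"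
    by (intro eventually_ball_finite f1 f2 ballI ev_imp ev_R5 nz1)
  have e6: "eventually (\<lambda>e. \<forall>x\<in>X2. \<forall>y\<in>X2. x \<noteq> y \<longrightarrow>
      sgn (det3 (Mv K e (hom (q2 x))) (Mv K e (hom (q2 y))) (hu3 K e)) = sgn (DD (q2 x) (q2 y) (0, 0))) (at_right 0)"
    by (intro eventually_ball_finite f1 f2 ballI ev_imp ev_R6 nz2)
  have e7: "eventually (\<lambda>e. \<forall>x\<in>X1 - {x0}. \<forall>y\<in>X2 - {x0}. det3 (hom (q1 x)) (Mv K e (hom (q2 y))) (hu3 K e) > 0) (at_right 0)"
    using Kc by (intro eventually_ball_finite f1 f2 ballI ev_R7 above) auto
  have "eventually (\<lambda>e. e > 0 \<and>
   (\<forall>z\<in>X2. snd (snd (Mv K e (hom (q2 z)))) > 0) \<and>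
   (\<forall>x\<in>X1. \<forall>y\<in>X1. \<forall>z\<in>X2 - {x0}. x \<noteq> y \<longrightarrow>
      sgn (det3 (hom (q1 x)) (hom (q1 y)) (Mv K e (hom (q2 z)))) = sgn (DD (q1 x) (q1 y) (0, 0))) \<and>
   (\<forall>x\<in>X1 - {x0}. \<forall>y\<in>X2. \<forall>z\<in>X2. y \<noteq> z \<longrightarrow>
      sgn (det3 (hom (q1 x)) (Mv K e (hom (q2 y))) (Mv K e (hom (q2 z)))) = sgn (DD (0, 0) (q2 y) (q2 z))) \<and>
   (\<forall>x\<in>X1. \<forall>y\<in>X1. x \<noteq> y \<longrightarrow>
      sgn (det3 (hom (q1 x)) (hom (q1 y)) (hu3 K e)) = sgn (DD (q1 x) (q1 y) (0, 0))) \<and>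
   (\<forall>x\<in>X2. \<forall>y\<in>X2. x \<noteq> y \<longrightarrow>
      sgn (det3 (Mv K e (hom (q2 x))) (Mv K e (hom (q2 y))) (hu3 K e)) = sgn (DD (q2 x) (q2 y) (0, 0))) \<and>
   (\<forall>x\<in>X1 - {x0}. \<forall>y\<in>X2 - {x0}. det3 (hom (q1 x)) (Mv K e (hom (q2 y))) (hu3 K e) > 0)) (at_right 0)"
    using e0 e1 e3 e4 e5 e6 e7 by eventually_elim blast
  thus ?thesis using eventually_happens'[OF trivial_limit_at_right_real] by blast
qed

end

locale J1 = J0 +
  fixes e :: real
  assumes epos: "e > 0"
    and px0: "pred_root (insert u1 X1) chi1 u1 = x0"
    and P0: "\<forall>z\<in>X2. snd (snd (Mv K e (hom (q2 z)))) > 0"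
    and PR3: "\<forall>x\<in>X1. \<forall>y\<in>X1. \<forall>z\<in>X2 - {x0}. x \<noteq> y \<longrightarrow>
      sgn (det3 (hom (q1 x)) (hom (q1 y)) (Mv K e (hom (q2 z)))) = sgn (DD (q1 x) (q1 y) (0, 0))"
    and PR4: "\<forall>x\<in>X1 - {x0}. \<forall>y\<in>X2. \<forall>z\<in>X2. y \<noteq> z \<longrightarrow>
      sgn (det3 (hom (q1 x)) (Mv K e (hom (q2 y))) (Mv K e (hom (q2 z)))) = sgn (DD (0, 0) (q2 y) (q2 z))"
    and PR5: "\<forall>x\<in>X1. \<forall>y\<in>X1. x \<noteq> y \<longrightarrow>
      sgn (det3 (hom (q1 x)) (hom (q1 y)) (hu3 K e)) = sgn (DD (q1 x) (q1 y) (0, 0))"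
    and PR6: "\<forall>x\<in>X2. \<forall>y\<in>X2. x \<noteq> y \<longrightarrow>
      sgn (det3 (Mv K e (hom (q2 x))) (Mv K e (hom (q2 y))) (hu3 K e)) = sgn (DD (q2 x) (q2 y) (0, 0))"
    and PR7: "\<forall>x\<in>X1 - {x0}. \<forall>y\<in>X2 - {x0}. det3 (hom (q1 x)) (Mv K e (hom (q2 y))) (hu3 K e) > 0"
begin

definition p3 :: "'a \<Rightarrow> real \<times> real" where
  "p3 x = (if x \<in> X1 then q1 x else if x \<in> X2 then dehom (Mv K e (hom (q2 x))) else dehom (hu3 K e))"

definition sig :: "'a \<Rightarrow> 'a \<Rightarrow> 'a \<Rightarrow> int" where
  "sig a b c = (if DD (p3 a) (p3 b) (p3 c) > 0 then 1 else -1)"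

lemma notin2: "w \<in> X1 \<Longrightarrow> w \<noteq> x0 \<Longrightarrow> w \<notin> X2" using inter by auto
lemma notin1: "w \<in> X2 \<Longrightarrow> w \<noteq> x0 \<Longrightarrow> w \<notin> X1" using inter by auto

lemma ne1: "x \<in> X1 \<Longrightarrow> x \<noteq> u1" "x \<in> X1 \<Longrightarrow> u1 \<noteq> x" using u1 by auto
lemma ne2: "x \<in> X2 \<Longrightarrow> x \<noteq> u2" "x \<in> X2 \<Longrightarrow> u2 \<noteq> x" using u2 by auto

lemma rep1: "x \<in> X1 \<Longrightarrow> p3 x = dehom (hom (q1 x))" by (simp add: p3_def dehom_hom)
lemma rep2: "x \<in> X2 \<Longrightarrow> p3 x = dehom (Mv K e (hom (q2 x)))"
proof -
  assume x: "x \<in> X2"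
  show ?thesis
  proof (cases "x = x0")
    case True
    thus ?thesis using epos by (simp add: p3_def x0X1 q1x q2x Mv_x0 dehom_def)
  next
    case False
    thus ?thesis using x notin1 by (simp add: p3_def)
  qed
qed
lemma rep3: "p3 u3 = dehom (hu3 K e)" using u3 by (simp add: p3_def)

lemma pos1: "snd (snd (hom p)) > 0" by (simp add: hom_def)
lemma pos2: "x \<in> X2 \<Longrightarrow> snd (snd (Mv K e (hom (q2 x)))) > 0" using P0 by auto
lemma pos3: "snd (snd (hu3 K e)) > 0" using epos by (simp add: hu3_def)

lemma T2: "a \<in> X2 \<Longrightarrow> b \<in> X2 \<Longrightarrow> c \<in> X2 \<Longrightarrow> sgn (DD (p3 a) (p3 b) (p3 c)) = sgn (DD (q2 a) (q2 b) (q2 c))"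
  using epos by (simp add: rep2 sgn_DD_dehom pos2 Mv_det det3_hom sgn_mult)

lemma T3: "a \<in> X1 \<Longrightarrow> b \<in> X1 \<Longrightarrow> c \<in> X2 - {x0} \<Longrightarrow> a \<noteq> b \<Longrightarrow>
    sgn (DD (p3 a) (p3 b) (p3 c)) = sgn (DD (q1 a) (q1 b) (q1 u1))"
  using PR3 by (simp add: rep1 rep2 sgn_DD_dehom pos1 pos2 q1u)

lemma T4: "a \<in> X1 - {x0} \<Longrightarrow> b \<in> X2 \<Longrightarrow> c \<in> X2 \<Longrightarrow> b \<noteq> c \<Longrightarrow>
    sgn (DD (p3 a) (p3 b) (p3 c)) = sgn (DD (q2 u2) (q2 b) (q2 c))"
  using PR4 by (simp add: rep1 rep2 sgn_DD_dehom pos1 pos2 q2u)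

lemma T5: "a \<in> X1 \<Longrightarrow> b \<in> X1 \<Longrightarrow> a \<noteq> b \<Longrightarrow>
    sgn (DD (p3 a) (p3 b) (p3 u3)) = sgn (DD (q1 a) (q1 b) (q1 u1))"
  using PR5 by (simp add: rep1 rep3 sgn_DD_dehom pos1 pos3 q1u)

lemma T6: "a \<in> X2 \<Longrightarrow> b \<in> X2 \<Longrightarrow> a \<noteq> b \<Longrightarrow>
    sgn (DD (p3 a) (p3 b) (p3 u3)) = sgn (DD (q2 a) (q2 b) (q2 u2))"
  using PR6 by (simp add: rep2 rep3 sgn_DD_dehom pos2 pos3 q2u)

lemma T7: "a \<in> X1 - {x0} \<Longrightarrow> b \<in> X2 - {x0} \<Longrightarrow> DD (p3 a) (p3 b) (p3 u3) > 0"
proof -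
  assume a: "a \<in> X1 - {x0}" and b: "b \<in> X2 - {x0}"
  have "sgn (DD (p3 a) (p3 b) (p3 u3)) = sgn (det3 (hom (q1 a)) (Mv K e (hom (q2 b))) (hu3 K e))"
    using a b by (simp add: rep1 rep2 rep3 sgn_DD_dehom pos1 pos2 pos3)
  also have "\<dots> = 1" using PR7 a b by simp
  finally show ?thesis by (simp add: sgn_1_pos)
qed

lemma sgn_chi:
  fixes A B :: real and v :: int
  assumes "sgn A = sgn B" "B \<noteq> 0" "v = (if B > 0 then 1 else -1)"
  shows "A \<noteq> 0" "v = (if A > 0 then 1 else -1)"
  using assms by (auto simp: sgn_real_def split: if_splits)

lemma S1: "a \<in> X1 \<Longrightarrow> b \<in> X1 \<Longrightarrow> c \<in> X1 \<Longrightarrow> distinct [a, b, c] \<Longrightarrow>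
   DD (p3 a) (p3 b) (p3 c) \<noteq> 0 \<and> chi1 a b c = sig a b c"
  using rz_val[OF rz1, of a b c] by (simp add: sig_def p3_def)

lemma S2: "a \<in> X2 \<Longrightarrow> b \<in> X2 \<Longrightarrow> c \<in> X2 \<Longrightarrow> distinct [a, b, c] \<Longrightarrow>
   DD (p3 a) (p3 b) (p3 c) \<noteq> 0 \<and> chi2 a b c = sig a b c"
proof -
  assume h0: "a \<in> X2" "b \<in> X2" "c \<in> X2" "distinct [a, b, c]"
  have h: "DD (q2 a) (q2 b) (q2 c) \<noteq> 0"
     "chi2 a b c = (if DD (q2 a) (q2 b) (q2 c) > 0 then 1 else -1)"
    using rz_val[OF rz2, of a b c] h0 by (auto simp: ne1 ne2)
  have "sgn (DD (p3 a) (p3 b) (p3 c)) = sgn (DD (q2 a) (q2 b) (q2 c))"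
    using h0 by (intro T2) auto
  from sgn_chi[OF this h(1) h(2)] show ?thesis by (simp add: sig_def)
qed

lemma S3: "a \<in> X1 \<Longrightarrow> b \<in> X1 \<Longrightarrow> c \<in> X2 - {x0} \<Longrightarrow> a \<noteq> b \<Longrightarrow>
   DD (p3 a) (p3 b) (p3 c) \<noteq> 0 \<and> chi1 a b u1 = sig a b c"
proof -
  assume h0: "a \<in> X1" "b \<in> X1" "c \<in> X2 - {x0}" "a \<noteq> b"
  have h: "DD (q1 a) (q1 b) (q1 u1) \<noteq> 0"
     "chi1 a b u1 = (if DD (q1 a) (q1 b) (q1 u1) > 0 then 1 else -1)"
    using rz_val[OF rz1, of a b u1] h0 by (auto simp: ne1 ne2)
  have "sgn (DD (p3 a) (p3 b) (p3 c)) = sgn (DD (q1 a) (q1 b) (q1 u1))"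
    using h0 by (intro T3) auto
  from sgn_chi[OF this h(1) h(2)] show ?thesis by (simp add: sig_def)
qed

lemma S4: "a \<in> X1 - {x0} \<Longrightarrow> b \<in> X2 \<Longrightarrow> c \<in> X2 \<Longrightarrow> b \<noteq> c \<Longrightarrow>
   DD (p3 a) (p3 b) (p3 c) \<noteq> 0 \<and> chi2 u2 b c = sig a b c"
proof -
  assume h0: "a \<in> X1 - {x0}" "b \<in> X2" "c \<in> X2" "b \<noteq> c"
  have h: "DD (q2 u2) (q2 b) (q2 c) \<noteq> 0"
     "chi2 u2 b c = (if DD (q2 u2) (q2 b) (q2 c) > 0 then 1 else -1)"
    using rz_val[OF rz2, of u2 b c] h0 by (auto simp: ne1 ne2)
  have "sgn (DD (p3 a) (p3 b) (p3 c)) = sgn (DD (q2 u2) (q2 b) (q2 c))"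
    using h0 by (intro T4) auto
  from sgn_chi[OF this h(1) h(2)] show ?thesis by (simp add: sig_def)
qed

lemma S5: "a \<in> X1 \<Longrightarrow> b \<in> X1 \<Longrightarrow> a \<noteq> b \<Longrightarrow>
   DD (p3 a) (p3 b) (p3 u3) \<noteq> 0 \<and> chi1 a b u1 = sig a b u3"
proof -
  assume h0: "a \<in> X1" "b \<in> X1" "a \<noteq> b"
  have h: "DD (q1 a) (q1 b) (q1 u1) \<noteq> 0"
     "chi1 a b u1 = (if DD (q1 a) (q1 b) (q1 u1) > 0 then 1 else -1)"
    using rz_val[OF rz1, of a b u1] h0 by (auto simp: ne1 ne2)
  have "sgn (DD (p3 a) (p3 b) (p3 u3)) = sgn (DD (q1 a) (q1 b) (q1 u1))"
    using h0 by (intro T5) auto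
  from sgn_chi[OF this h(1) h(2)] show ?thesis by (simp add: sig_def)
qed

lemma S6: "a \<in> X2 \<Longrightarrow> b \<in> X2 \<Longrightarrow> a \<noteq> b \<Longrightarrow>
   DD (p3 a) (p3 b) (p3 u3) \<noteq> 0 \<and> chi2 a b u2 = sig a b u3"
proof -
  assume h0: "a \<in> X2" "b \<in> X2" "a \<noteq> b"
  have h: "DD (q2 a) (q2 b) (q2 u2) \<noteq> 0"
     "chi2 a b u2 = (if DD (q2 a) (q2 b) (q2 u2) > 0 then 1 else -1)"
    using rz_val[OF rz2, of a b u2] h0 by (auto simp: ne1 ne2)
  have "sgn (DD (p3 a) (p3 b) (p3 u3)) = sgn (DD (q2 a) (q2 b) (q2 u2))"
    using h0 by (intro T6) auto
  from sgn_chi[OF this h(1) h(2)] show ?thesis by (simp add: sig_def)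
qed

lemma S7: "a \<in> X1 - {x0} \<Longrightarrow> b \<in> X2 - {x0} \<Longrightarrow>
   DD (p3 a) (p3 b) (p3 u3) \<noteq> 0 \<and> 1 = sig a b u3"
  using T7[of a b] by (auto simp: sig_def)

end

context J1
begin

abbreviation rr where "rr \<equiv> join_rule X1 chi1 u1 X2 chi2 u2 x0 u3"

definition GG where "GG = insert u3 (X1 \<union> X2)"

lemma sound:
  assumes "a \<in> GG" "b \<in> GG" "c \<in> GG" "distinct [a, b, c]" "rr a b c = Some v"
  shows "DD (p3 a) (p3 b) (p3 c) \<noteq> 0 \<and> v = sig a b c"
proof -
  have d: "a \<noteq> b" "a \<noteq> c" "b \<noteq> c" using assms(4) by auto
  have all: "(a \<in> X1 \<and> b \<in> X1 \<and> c \<in> X1 \<longrightarrow> DD (p3 a) (p3 b) (p3 c) \<noteq> 0 \<and> chi1 a b c = sig a b c) \<and>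
    (a \<in> X2 \<and> b \<in> X2 \<and> c \<in> X2 \<longrightarrow> DD (p3 a) (p3 b) (p3 c) \<noteq> 0 \<and> chi2 a b c = sig a b c) \<and>
    (a \<in> X1 \<and> b \<in> X1 \<and> c \<in> X2 - {x0} \<longrightarrow> DD (p3 a) (p3 b) (p3 c) \<noteq> 0 \<and> chi1 a b u1 = sig a b c) \<and>
    (a \<in> X1 - {x0} \<and> b \<in> X2 \<and> c \<in> X2 \<longrightarrow> DD (p3 a) (p3 b) (p3 c) \<noteq> 0 \<and> chi2 u2 b c = sig a b c) \<and>
    (c = u3 \<and> a \<in> X1 \<and> b \<in> X1 \<longrightarrow> DD (p3 a) (p3 b) (p3 c) \<noteq> 0 \<and> chi1 a b u1 = sig a b c) \<and>
    (c = u3 \<and> a \<in> X2 \<and> b \<in> X2 \<longrightarrow> DD (p3 a) (p3 b) (p3 c) \<noteq> 0 \<and> chi2 a b u2 = sig a b c) \<and>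
    (c = u3 \<and> a \<in> X1 - {x0} \<and> b \<in> X2 - {x0} \<longrightarrow> DD (p3 a) (p3 b) (p3 c) \<noteq> 0 \<and> 1 = sig a b c)"
    using S1[of a b c] S2[of a b c] S3[of a b c] S4[of a b c] S5[of a b] S6[of a b] S7[of a b] assms(4) d
    by blast
  show ?thesis
    using assms(5) all unfolding join_rule_def by (auto split: if_split_asm)
qed

definition pat where "pat x y z \<longleftrightarrow> (x \<in> X1 \<and> y \<in> X1 \<and> z \<in> X1) \<or> (x \<in> X2 \<and> y \<in> X2 \<and> z \<in> X2) \<or>
  (x \<in> X1 \<and> y \<in> X1 \<and> z \<in> X2 - {x0}) \<or> (x \<in> X1 - {x0} \<and> y \<in> X2 \<and> z \<in> X2) \<or>
  (z = u3 \<and> x \<in> X1 \<and> y \<in> X1) \<or> (z = u3 \<and> x \<in> X2 \<and> y \<in> X2) \<or>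
  (z = u3 \<and> x \<in> X1 - {x0} \<and> y \<in> X2 - {x0})"

lemma pat_nn: "pat x y z \<Longrightarrow> rr x y z \<noteq> None"
  unfolding pat_def join_rule_def by auto

lemma cls: "w \<in> GG \<Longrightarrow> w \<in> X1 - {x0} \<or> w = x0 \<or> w \<in> X2 - {x0} \<or> w = u3"
  unfolding GG_def by auto

lemma cover:
  assumes "a \<in> GG" "b \<in> GG" "c \<in> GG" "distinct [a, b, c]"
  shows "pat a b c \<or> pat b c a \<or> pat c a b \<or> pat c b a \<or> pat b a c \<or> pat a c b"
  using cls[OF assms(1)] cls[OF assms(2)] cls[OF assms(3)] assms(4) x0X1 x0X2 u3 notin1 notin2
  unfolding pat_def by (elim disjE) auto

lemma the_rr: "x \<in> GG \<Longrightarrow> y \<in> GG \<Longrightarrow> z \<in> GG \<Longrightarrow> distinct [x, y, z] \<Longrightarrow> rr x y z \<noteq> None \<Longrightarrow>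
   the (rr x y z) = sig x y z \<and> DD (p3 x) (p3 y) (p3 z) \<noteq> 0"
  using sound[of x y z "the (rr x y z)"] by auto

lemma nzall:
  assumes "a \<in> GG" "b \<in> GG" "c \<in> GG" "distinct [a, b, c]"
  shows "DD (p3 a) (p3 b) (p3 c) \<noteq> 0"
proof -
  have d: "distinct [b, c, a]" "distinct [c, a, b]" "distinct [c, b, a]" "distinct [b, a, c]" "distinct [a, c, b]"
    using assms(4) by auto
  have r: "DD (p3 b) (p3 c) (p3 a) = DD (p3 a) (p3 b) (p3 c)" "DD (p3 c) (p3 a) (p3 b) = DD (p3 a) (p3 b) (p3 c)"
    "DD (p3 c) (p3 b) (p3 a) = - DD (p3 a) (p3 b) (p3 c)" "DD (p3 b) (p3 a) (p3 c) = - DD (p3 a) (p3 b) (p3 c)"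
    "DD (p3 a) (p3 c) (p3 b) = - DD (p3 a) (p3 b) (p3 c)"
    by (rule DD_rot1, rule DD_rot2, rule DD_swap13, rule DD_swap12, rule DD_swap23)
  show ?thesis
    using cover[OF assms] pat_nn the_rr[OF assms] the_rr[OF assms(2,3,1) d(1)] the_rr[OF assms(3,1,2) d(2)]
      the_rr[OF assms(3,2,1) d(3)] the_rr[OF assms(2,1,3) d(4)] the_rr[OF assms(1,3,2) d(5)] r
    by auto
qed

lemma sig_rels:
  assumes "a \<in> GG" "b \<in> GG" "c \<in> GG" "distinct [a, b, c]"
  shows "sig b c a = sig a b c" "sig c a b = sig a b c" "sig c b a = - sig a b c"
    "sig b a c = - sig a b c" "sig a c b = - sig a b c"
proof -
  have r: "DD (p3 b) (p3 c) (p3 a) = DD (p3 a) (p3 b) (p3 c)" "DD (p3 c) (p3 a) (p3 b) = DD (p3 a) (p3 b) (p3 c)"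
    "DD (p3 c) (p3 b) (p3 a) = - DD (p3 a) (p3 b) (p3 c)" "DD (p3 b) (p3 a) (p3 c) = - DD (p3 a) (p3 b) (p3 c)"
    "DD (p3 a) (p3 c) (p3 b) = - DD (p3 a) (p3 b) (p3 c)"
    by (rule DD_rot1, rule DD_rot2, rule DD_swap13, rule DD_swap12, rule DD_swap23)
  have nz: "DD (p3 a) (p3 b) (p3 c) \<noteq> 0" by (rule nzall[OF assms])
  show "sig b c a = sig a b c" "sig c a b = sig a b c" "sig c b a = - sig a b c"
    "sig b a c = - sig a b c" "sig a c b = - sig a b c"
    unfolding sig_def r using nz by auto
qed

lemma jc:
  assumes "a \<in> GG" "b \<in> GG" "c \<in> GG" "distinct [a, b, c]"
  shows "join_chi X1 chi1 u1 X2 chi2 u2 u3 a b c = sig a b c"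
proof -
  have d: "distinct [b, c, a]" "distinct [c, a, b]" "distinct [c, b, a]" "distinct [b, a, c]" "distinct [a, c, b]"
    using assms(4) by auto
  note t = the_rr[OF assms] the_rr[OF assms(2,3,1) d(1)] the_rr[OF assms(3,1,2) d(2)]
      the_rr[OF assms(3,2,1) d(3)] the_rr[OF assms(2,1,3) d(4)] the_rr[OF assms(1,3,2) d(5)]
  note s = sig_rels[OF assms]
  have c: "\<not> (rr a b c = None \<and> rr b c a = None \<and> rr c a b = None \<and> rr c b a = None \<and> rr b a c = None \<and> rr a c b = None)"
    using cover[OF assms] pat_nn by blast
  show ?thesis
    unfolding join_chi_def Let_def px0 option.case_eq_if
    using t s c by auto
qed

lemma sig_pos: "DD (p3 a) (p3 b) (p3 c) > 0 \<Longrightarrow> sig a b c = 1" by (simp add: sig_def)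

lemma sgn_pos_tr: "sgn (A::real) = sgn B \<Longrightarrow> B > 0 \<Longrightarrow> A > 0"
  by (simp add: sgn_real_def split: if_splits)

theorem main: "rooted_realizable_chirotope (X1 \<union> X2) (join_chi X1 chi1 u1 X2 chi2 u2 u3) u3"
proof -
  let ?chi = "join_chi X1 chi1 u1 X2 chi2 u2 u3"
  have finG: "finite GG" using fin1 fin2 by (simp add: GG_def)
  have rzG: "rz GG ?chi p3"
    unfolding rz_def using nzall jc by (simp add: sig_def)
  have sf1: "sign_function (insert u1 X1) chi1" using rz_sign_function[OF _ rz1] fin1 by simp
  have sf2: "sign_function (insert u2 X2) chi2" using rz_sign_function[OF _ rz2] fin2 by simp
  have s1G: "s1 \<in> GG" using s1 by (simp add: GG_def)
  have s1u: "s1 \<noteq> u3" using s1 u3 by auto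
  have ext: "\<forall>z\<in>GG - {u3, s1}. ?chi u3 s1 z = 1"
  proof
    fix z assume z: "z \<in> GG - {u3, s1}"
    have zG: "z \<in> GG" and zn: "z \<noteq> u3" "z \<noteq> s1" using z by auto
    have dz: "distinct [u3, s1, z]" using zn s1u by auto
    have "?chi u3 s1 z = sig u3 s1 z" using jc[OF _ s1G zG dz] by (simp add: GG_def)
    also have "\<dots> = sig s1 z u3" unfolding sig_def by (simp only: DD_rot2)
    also have "\<dots> = 1"
    proof (rule sig_pos)
      show "DD (p3 s1) (p3 z) (p3 u3) > 0"
      proof (cases "z \<in> X1")
        case True
        have "chi1 u1 s1 z = 1" using succ1 True zn by auto
        moreover have "distinct [u1, s1, z]" using True s1 zn u1 by auto
        ultimately have "chi1 s1 z u1 = 1" using sf_props(2)[OF sf1, of u1 s1 z] True s1 by auto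
        hence "DD (q1 s1) (q1 z) (q1 u1) > 0"
          using rz_one_iff[OF rz1, of s1 z u1] True s1 zn u1 by auto
        thus ?thesis using T5[of s1 z] True s1 zn sgn_pos_tr by metis
      next
        case False
        hence zX2: "z \<in> X2 - {x0}" using zG zn x0X1 by (auto simp: GG_def)
        show ?thesis
        proof (cases "s1 = x0")
          case True
          have "chi2 u2 x0 z = 1" using succ2 zX2 by auto
          moreover have "distinct [u2, x0, z]" using zX2 u2 x0X2 by auto
          ultimately have "chi2 x0 z u2 = 1" using sf_props(2)[OF sf2, of u2 x0 z] zX2 x0X2 by auto
          hence "DD (q2 x0) (q2 z) (q2 u2) > 0"
            using rz_one_iff[OF rz2, of x0 z u2] zX2 x0X2 u2 by auto
          thus ?thesis using T6[of x0 z] True zX2 x0X2 sgn_pos_tr by (metis DiffD1 DiffD2 singletonI)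
        next
          case False
          thus ?thesis using T7[of s1 z] s1 zX2 by auto
        qed
      qed
    qed
    finally show "?chi u3 s1 z = 1" .
  qed
  have "extreme GG ?chi u3"
    unfolding extreme_def using s1G s1u ext by (auto simp: GG_def intro!: bexI[of _ s1])
  thus ?thesis
    unfolding rooted_realizable_chirotope_def rooted_chirotope_def
    using u3 rz_chirotope[OF finG rzG] rz_realizable[OF rzG] by (simp add: GG_def)
qed

end

theorem proposition2p2:
  fixes X1 X2 :: "'a set"
    and chi1 chi2 :: "'a \<Rightarrow> 'a \<Rightarrow> 'a \<Rightarrow> int"
    and u1 u2 u3 :: 'a
  assumes "rooted_realizable_chirotope X1 chi1 u1"
    and "rooted_realizable_chirotope X2 chi2 u2"
    and "pred_root (insert u1 X1) chi1 u1 = succ_root (insert u2 X2) chi2 u2"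
    and "X1 \<inter> X2 = {pred_root (insert u1 X1) chi1 u1}"
    and "u3 \<notin> X1 \<union> X2"
  shows "rooted_realizable_chirotope (X1 \<union> X2) (join_chi X1 chi1 u1 X2 chi2 u2 u3) u3"
proof -
  note R1 = assms(1) and R2 = assms(2)
  define x0 where "x0 = pred_root (insert u1 X1) chi1 u1"
  have x0X1: "x0 \<in> X1" and pred1: "\<forall>z\<in>X1 - {x0}. chi1 x0 u1 z = 1"
    using pred_root_prop[OF R1] x0_def by auto
  have sx: "succ_root (insert u2 X2) chi2 u2 = x0" using assms(3) x0_def by simp
  have x0X2: "x0 \<in> X2" and succ2: "\<forall>z\<in>X2 - {x0}. chi2 u2 x0 z = 1"
    using succ_root_prop[OF R2] sx by auto
  obtain s1 where s1: "s1 \<in> X1" "\<forall>z\<in>X1 - {s1}. chi1 u1 s1 z = 1"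
    using succ_root_prop[OF R1] by blast
  note B1 = rooted_basic[OF R1] and B2 = rooted_basic[OF R2]
  obtain p1 where p1: "rz (insert u1 X1) chi1 p1" using B1(4) by blast
  obtain p2 where p2: "rz (insert u2 X2) chi2 p2" using B2(4) by blast
  obtain q1 where q1: "rz (insert u1 X1) chi1 q1" "q1 u1 = (0, 0)" "q1 x0 = (1, 0)"
    using rz_normalize[OF p1, of u1 x0] x0X1 B1(1) by auto
  obtain q2 where q2: "rz (insert u2 X2) chi2 q2" "q2 u2 = (0, 0)" "q2 x0 = (1, 0)"
    using rz_normalize[OF p2, of u2 x0] x0X2 B2(1) by auto
  have below: "snd (q1 x) < 0" if x: "x \<in> X1 - {x0}" for x
  proof -
    have "chi1 x0 u1 x = 1" using pred1 x by auto
    moreover have "distinct [x0, u1, x]" using x B1(1) x0X1 by auto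
    ultimately have "DD (q1 x0) (q1 u1) (q1 x) > 0" using rz_one_iff[OF q1(1)] x x0X1 by auto
    thus ?thesis by (simp add: q1 DD_def)
  qed
  have "eventually (\<lambda>K. \<forall>x\<in>X1 - {x0}. fst (q1 x) - K * snd (q1 x) > 0) at_top"
  proof (rule eventually_ball_finite, use B1(3) in simp, intro ballI)
    fix x assume x: "x \<in> X1 - {x0}"
    show "eventually (\<lambda>K. fst (q1 x) - K * snd (q1 x) > 0) at_top"
      using eventually_gt_at_top[of "fst (q1 x) / snd (q1 x)"]
    proof eventually_elim
      case (elim K)
      thus ?case using below[OF x] by (simp add: neg_divide_less_eq)
    qed
  qed
  then obtain K where K: "\<forall>x\<in>X1 - {x0}. fst (q1 x) - K * snd (q1 x) > 0"
    unfolding eventually_at_top_linorder by auto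
  have inter: "X1 \<inter> X2 = {x0}" using assms(4) x0_def by simp
  interpret J0 X1 X2 chi1 chi2 u1 u2 u3 x0 s1 q1 q2 K
    by unfold_locales (fact B1(3) B2(3) B1(1) B2(1) assms(5) inter q1 q2 pred1 succ2 s1 K)+
  obtain e where e0: "e > 0"
   and e1: "\<forall>z\<in>X2. snd (snd (Mv K e (hom (q2 z)))) > 0"
   and e3: "\<forall>x\<in>X1. \<forall>y\<in>X1. \<forall>z\<in>X2 - {x0}. x \<noteq> y \<longrightarrow>
      sgn (det3 (hom (q1 x)) (hom (q1 y)) (Mv K e (hom (q2 z)))) = sgn (DD (q1 x) (q1 y) (0, 0))"
   and e4: "\<forall>x\<in>X1 - {x0}. \<forall>y\<in>X2. \<forall>z\<in>X2. y \<noteq> z \<longrightarrow>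
      sgn (det3 (hom (q1 x)) (Mv K e (hom (q2 y))) (Mv K e (hom (q2 z)))) = sgn (DD (0, 0) (q2 y) (q2 z))"
   and e5: "\<forall>x\<in>X1. \<forall>y\<in>X1. x \<noteq> y \<longrightarrow>
      sgn (det3 (hom (q1 x)) (hom (q1 y)) (hu3 K e)) = sgn (DD (q1 x) (q1 y) (0, 0))"
   and e6: "\<forall>x\<in>X2. \<forall>y\<in>X2. x \<noteq> y \<longrightarrow>
      sgn (det3 (Mv K e (hom (q2 x))) (Mv K e (hom (q2 y))) (hu3 K e)) = sgn (DD (q2 x) (q2 y) (0, 0))"
   and e7: "\<forall>x\<in>X1 - {x0}. \<forall>y\<in>X2 - {x0}. det3 (hom (q1 x)) (Mv K e (hom (q2 y))) (hu3 K e) > 0"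
    using ex_e by (elim exE conjE) (rule that; assumption)
  interpret J1 X1 X2 chi1 chi2 u1 u2 u3 x0 s1 q1 q2 K e
    by unfold_locales (fact e0 e1 e3 e4 e5 e6 e7 x0_def[symmetric])+
  show ?thesis by (rule main)
qed


end
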